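(* Let $G=(V,E)$ and $G'=(V',E')$ be graphs, and let $(u,v)$ be an ordered edge of $G$ and $(u',v')$ an ordered edge of $G'$. Then for every $t\ge0$: (1) If $\mathrm{eb}^{(t)}(G)=\mathrm{eb}^{(t)}(G')$, then $\mathrm{tp}^t(G)=\mathrm{tp}^t(G')$. (2) If $\mathrm{eb}^{(t)}(G,(u,v))=\mathrm{eb}^{(t)}(G',(u',v'))$ and $\mathrm{eb}^{(t)}(G)=\mathrm{eb}^{(t)}(G')$, then $\mathrm{tp}^t(G,u)=\mathrm{tp}^t(G',u')$, $\mathrm{tp}^t(G,v)=\mathrm{tp}^t(G',v')$, and $\mathrm{tp}^t(G,(u,v))=\mathrm{tp}^t(G',(u',v'))$.
   Context: All graphs are finite, simple and undirected, without isolated vertices; $N(v)$ denotes the neighborhood of $v$. An ordered edge of $G=(V,E)$ is a pair $(u,v)$ with $\{u,v\}\in E$. EB-1WL coloring: $\mathrm{eb}^{(0)}(G,(u,v))=1$ for every ordered edge, and $\mathrm{eb}^{(\ell+1)}(G,(u,v)) = \big(\mathrm{eb}^{(\ell)}(G,(u,v)),\ \{\!\{\mathrm{eb}^{(\ell)}(G,(u,x)) : x\in N(u)\}\!\},\ \{\!\{(\mathrm{eb}^{(\ell)}(G,(u,y)),\mathrm{eb}^{(\ell)}(G,(v,y))) : y\in N(u)\cap N(v)\}\!\},\ \{\!\{\mathrm{eb}^{(\ell)}(G,(v,z)) : z\in N(v)\}\!\}\big)$. $\mathrm{eb}^{(t)}(G)$ is the multiset of $\mathrm{eb}^{(t)}(G,(u,v))$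 over all ordered edges $(u,v)$ of $G$. Logic: first-order logic over the vocabulary with one binary relation $E$, where $E(x,y)$ holds of $(u,v)$ iff $\{u,v\}$ is an edge. For a tuple $\bar x=(x_1,\dots,x_n)$ of distinct variables, $\mathrm{clique}(\bar x):=\bigwedge_{1\le i<j\le n}E(x_i,x_j)$ (empty conjunction = true). CFOC is the smallest set of formulas such that: (1) $\mathrm{clique}(\bar x)$ is in CFOC; (2) if $\phi(\bar x)\in$ CFOC then $\mathrm{clique}(\bar x)\wedge\neg\phi(\bar x)\in$ CFOC; (3) if $\phi(\bar x),\psi(\bar y)\in$ CFOC then $\mathrm{clique}(\bar z)\wedge(\phi(\bar x)\star\psi(\bar y))\in$ CFOC for $\star\in\{\wedge,\vee\}$, where $\bar z$ lists each variable of $\bar x$ and $\bar y$ exactly once; (4) if $\phi(\bar x,y)\in$ CFOC then $\mathrm{clique}(\bar x)\wedge\exists^{\ge k}y\,\phi(\bar x,y)\in$ CFOC for every integer $k\ge1$ ($\exists^{\ge k}$: at least $k$ witnesses). $\mathrm{CFOC}^3$: CFOC formulas using at most three distinct variables. For a graph $G$ and a tuple $\bar v$ of vertices (possibly empty), the $t$-type $\mathrm{tp}^t(G,\bar v)$ is the set of $\mathrm{CFOC}^3$ formulas $\phi(\bar x)$ of quantifier depth $t$ (with $|\bar x|=|\bar v|$) such that $G\models\phi(\bar v)$; $\mathrm{tp}^t(G)$ is the set of such sentences true in $G$. *)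

theory Defs
  imports Main "HOL-Library.Multiset"
begin

definition graph :: "'a set \<Rightarrow> ('a \<Rightarrow> 'a \<Rightarrow> bool) \<Rightarrow> bool" where
  "graph V E \<longleftrightarrow> finite V \<and> (\<forall>x y. E x y \<longrightarrow> x \<in> V \<and> y \<in> V)
     \<and> (\<forall>x y. E x y \<longrightarrow> E y x) \<and> (\<forall>x. \<not> E x x) \<and> (\<forall>x\<in>V. \<exists>y. E x y)"

definition nbh :: "'a set \<Rightarrow> ('a \<Rightarrow> 'a \<Rightarrow> bool) \<Rightarrow> 'a \<Rightarrow> 'a set" where
  "nbh V E x = {y \<in> V. E x y}"

definition ordered_edges :: "'a set \<Rightarrow> ('a \<Rightarrow> 'a \<Rightarrow> bool) \<Rightarrow> ('a \<times> 'a) set" where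
  "ordered_edges V E = {(u, v). u \<in> V \<and> v \<in> V \<and> E u v}"

datatype ebcol = EB0
  | EBS ebcol "ebcol multiset" "(ebcol \<times> ebcol) multiset" "ebcol multiset"

primrec eb :: "nat \<Rightarrow> 'a set \<Rightarrow> ('a \<Rightarrow> 'a \<Rightarrow> bool) \<Rightarrow> 'a \<Rightarrow> 'a \<Rightarrow> ebcol" where
  "eb 0 V E u v = EB0"
| "eb (Suc l) V E u v =
     EBS (eb l V E u v)
         (image_mset (\<lambda>x. eb l V E u x) (mset_set (nbh V E u)))
         (image_mset (\<lambda>y. (eb l V E u y, eb l V E v y)) (mset_set (nbh V E u \<inter> nbh V E v)))
         (image_mset (\<lambda>z. eb l V E v z) (mset_set (nbh V E v)))"

definition eb_graph :: "nat \<Rightarrow> 'a set \<Rightarrow> ('a \<Rightarrow> 'a \<Rightarrow> bool) \<Rightarrow> ebcol multiset" where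
  "eb_graph t V E = image_mset (\<lambda>(u, v). eb t V E u v) (mset_set (ordered_edges V E))"

text \<open>Syntax: each constructor carries the tuple of free variables (the clique guard).\<close>
datatype fm = Clq "nat list" | Neg "nat list" fm | Conj "nat list" fm fm
  | Disj "nat list" fm fm | Ex "nat list" nat nat fm

inductive cfoc :: "nat list \<Rightarrow> fm \<Rightarrow> bool" where
  clq: "distinct xs \<Longrightarrow> cfoc xs (Clq xs)"
| neg: "cfoc xs f \<Longrightarrow> cfoc xs (Neg xs f)"
| conj: "cfoc xs f \<Longrightarrow> cfoc ys g \<Longrightarrow> distinct zs \<Longrightarrow> set zs = set xs \<union> set ys
          \<Longrightarrow> cfoc zs (Conj zs f g)"
| disj: "cfoc xs f \<Longrightarrow> cfoc ys g \<Longrightarrow> distinct zs \<Longrightarrow> set zs = set xs \<union> set ys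
          \<Longrightarrow> cfoc zs (Disj zs f g)"
| ex: "cfoc (xs @ [y]) f \<Longrightarrow> k \<ge> 1 \<Longrightarrow> cfoc xs (Ex xs y k f)"

primrec fvars :: "fm \<Rightarrow> nat set" where
  "fvars (Clq xs) = set xs"
| "fvars (Neg xs f) = set xs \<union> fvars f"
| "fvars (Conj xs f g) = set xs \<union> fvars f \<union> fvars g"
| "fvars (Disj xs f g) = set xs \<union> fvars f \<union> fvars g"
| "fvars (Ex xs y k f) = set xs \<union> {y} \<union> fvars f"

primrec qdepth :: "fm \<Rightarrow> nat" where
  "qdepth (Clq xs) = 0"
| "qdepth (Neg xs f) = qdepth f"
| "qdepth (Conj xs f g) = max (qdepth f) (qdepth g)"
| "qdepth (Disj xs f g) = max (qdepth f) (qdepth g)"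
| "qdepth (Ex xs y k f) = Suc (qdepth f)"

definition clique_sat :: "('a \<Rightarrow> 'a \<Rightarrow> bool) \<Rightarrow> (nat \<Rightarrow> 'a) \<Rightarrow> nat list \<Rightarrow> bool" where
  "clique_sat E \<sigma> xs \<longleftrightarrow> (\<forall>i j. i < j \<and> j < length xs \<longrightarrow> E (\<sigma> (xs ! i)) (\<sigma> (xs ! j)))"

primrec sat :: "'a set \<Rightarrow> ('a \<Rightarrow> 'a \<Rightarrow> bool) \<Rightarrow> (nat \<Rightarrow> 'a) \<Rightarrow> fm \<Rightarrow> bool" where
  "sat V E \<sigma> (Clq xs) = clique_sat E \<sigma> xs"
| "sat V E \<sigma> (Neg xs f) = (clique_sat E \<sigma> xs \<and> \<not> sat V E \<sigma> f)"
| "sat V E \<sigma> (Conj xs f g) = (clique_sat E \<sigma> xs \<and> sat V E \<sigma> f \<and> sat V E \<sigma> g)"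
| "sat V E \<sigma> (Disj xs f g) = (clique_sat E \<sigma> xs \<and> (sat V E \<sigma> f \<or> sat V E \<sigma> g))"
| "sat V E \<sigma> (Ex xs y k f) =
     (clique_sat E \<sigma> xs \<and> k \<le> card {w \<in> V. sat V E (\<sigma>(y := w)) f})"

definition assign :: "nat list \<Rightarrow> 'a list \<Rightarrow> nat \<Rightarrow> 'a" where
  "assign xs vs x = (case map_of (zip xs vs) x of Some w \<Rightarrow> w | None \<Rightarrow> undefined)"

definition tp :: "nat \<Rightarrow> 'a set \<Rightarrow> ('a \<Rightarrow> 'a \<Rightarrow> bool) \<Rightarrow> 'a list \<Rightarrow> (nat list \<times> fm) set" where
  "tp t V E vs = {(xs, f). cfoc xs f \<and> card (fvars f) \<le> 3 \<and> qdepth f \<le> t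
                    \<and> length xs = length vs \<and> sat V E (assign xs vs) f}"

end

theory Submission
  imports Defs
begin

lemma eb_swap: "eb r V E a b = eb r V' E' a' b' \<Longrightarrow> eb r V E b a = eb r V' E' b' a'"
proof (induction r arbitrary: a b a' b')
  case 0 thus ?case by simp
next
  case (Suc r)
  have sw: "image_mset (\<lambda>y. (eb r V E b y, eb r V E a y)) (mset_set (nbh V E b \<inter> nbh V E a))
     = image_mset prod.swap (image_mset (\<lambda>y. (eb r V E a y, eb r V E b y)) (mset_set (nbh V E a \<inter> nbh V E b)))"
    for V :: "'x set" and E a b
    by (simp add: multiset.map_comp comp_def Int_commute[of "nbh V E b" "nbh V E a"])
  from Suc.prems have h: "eb r V E a b = eb r V' E' a' b'"
    "image_mset (\<lambda>x. eb r V E a x) (mset_set (nbh V E a)) = image_mset (\<lambda>x. eb r V' E' a' x) (mset_set (nbh V' E' a'))"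
    "image_mset (\<lambda>y. (eb r V E a y, eb r V E b y)) (mset_set (nbh V E a \<inter> nbh V E b)) =
     image_mset (\<lambda>y. (eb r V' E' a' y, eb r V' E' b' y)) (mset_set (nbh V' E' a' \<inter> nbh V' E' b'))"
    "image_mset (\<lambda>x. eb r V E b x) (mset_set (nbh V E b)) = image_mset (\<lambda>x. eb r V' E' b' x) (mset_set (nbh V' E' b'))"
    by simp_all
  have "eb r V E b a = eb r V' E' b' a'" using Suc.IH[OF h(1)] .
  moreover have "image_mset (\<lambda>y. (eb r V E b y, eb r V E a y)) (mset_set (nbh V E b \<inter> nbh V E a))
     = image_mset (\<lambda>y. (eb r V' E' b' y, eb r V' E' a' y)) (mset_set (nbh V' E' b' \<inter> nbh V' E' a'))"
    using sw h(3) by metis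
  ultimately show ?case unfolding eb.simps ebcol.inject using h(2,4) by blast
qed

fun vc :: "nat \<Rightarrow> 'a set \<Rightarrow> ('a \<Rightarrow> 'a \<Rightarrow> bool) \<Rightarrow> 'a \<Rightarrow> ebcol multiset" where
  "vc 0 V E a = {#}"
| "vc (Suc q) V E a = image_mset (\<lambda>x. eb q V E a x) (mset_set (nbh V E a))"

fun fstc :: "ebcol \<Rightarrow> ebcol" where
  "fstc EB0 = EB0" | "fstc (EBS c _ _ _) = c"

fun c2 :: "ebcol \<Rightarrow> ebcol multiset" where
  "c2 EB0 = {#}" | "c2 (EBS _ m _ _) = m"

lemma vc_mono: "vc (Suc r) V E a = vc (Suc r) V' E' a' \<Longrightarrow> vc r V E a = vc r V' E' a'"
proof (cases r)
  case (Suc q)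
  have "vc r V E a = image_mset fstc (vc (Suc r) V E a)" for V :: "'x set" and E a
    using Suc by (simp add: multiset.map_comp comp_def)
  then show "vc (Suc r) V E a = vc (Suc r) V' E' a' \<Longrightarrow> vc r V E a = vc r V' E' a'" by metis
qed simp

lemma eb_vc: "eb r V E a b = eb r V' E' a' b' \<Longrightarrow> vc r V E a = vc r V' E' a'"
  by (cases r) auto

lemma eb_graph_mono: "eb_graph r V E = image_mset fstc (eb_graph (Suc r) V E)"
  unfolding eb_graph_def by (simp add: multiset.map_comp comp_def split_def)

lemma eb_graph_le_aux: "eb_graph (s + d) V E = eb_graph (s + d) V' E' \<Longrightarrow> eb_graph s V E = eb_graph s V' E'"
proof (induction d)
  case (Suc d)
  then show ?case using eb_graph_mono[of "s + d" V E] eb_graph_mono[of "s + d" V' E'] by simp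
qed simp

lemma eb_graph_le: "eb_graph t V E = eb_graph t V' E' \<Longrightarrow> s \<le> t \<Longrightarrow> eb_graph s V E = eb_graph s V' E'"
  using eb_graph_le_aux[of s "t - s"] by simp

lemma count_image_mset_set: "finite A \<Longrightarrow> count (image_mset g (mset_set A)) m = card {x\<in>A. g x = m}"
proof (induction A rule: finite_induct)
  case (insert x F)
  have "{y\<in>insert x F. g y = m} = (if g x = m then insert x {y\<in>F. g y = m} else {y\<in>F. g y = m})"
    by auto
  then show ?case using insert by (simp add: card_insert_if)
qed simp

lemma card_key:
  assumes "finite A" "finite A'" "image_mset \<kappa> (mset_set A) = image_mset \<kappa>' (mset_set A')"
    and "\<And>w w'. w\<in>A \<Longrightarrow> w'\<in>A' \<Longrightarrow> \<kappa> w = \<kappa>' w' \<Longrightarrow> Q w = Q' w'"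
  shows "card {w\<in>A. Q w} = card {w\<in>A'. Q' w}"
proof -
  define R where "R c = (\<exists>w\<in>A. \<kappa> w = c \<and> Q w)" for c
  have s: "\<kappa> ` A = \<kappa>' ` A'" using arg_cong[OF assms(3), of set_mset] assms(1,2) by simp
  have 1: "Q w = R (\<kappa> w)" if "w\<in>A" for w
  proof
    assume "R (\<kappa> w)"
    then obtain w2 where w2: "w2\<in>A" "\<kappa> w2 = \<kappa> w" "Q w2" unfolding R_def by blast
    have "\<kappa> w \<in> \<kappa>' ` A'" using s that by blast
    then obtain w' where w': "w'\<in>A'" "\<kappa>' w' = \<kappa> w" by (metis imageE)
    have "Q w2 = Q' w'" using assms(4)[OF w2(1) w'(1)] w2(2) w'(2) by simp
    moreover have "Q w = Q' w'" using assms(4)[OF that w'(1)] w'(2) by simp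
    ultimately show "Q w" using w2(3) by simp
  next
    assume "Q w" then show "R (\<kappa> w)" unfolding R_def using that by blast
  qed
  have 2: "Q' w' = R (\<kappa>' w')" if "w'\<in>A'" for w'
  proof
    assume "Q' w'"
    have "\<kappa>' w' \<in> \<kappa> ` A" using s that by blast
    then obtain w where w: "w\<in>A" "\<kappa> w = \<kappa>' w'" by (metis imageE)
    then have "Q w" using assms(4)[OF w(1) that w(2)] \<open>Q' w'\<close> by simp
    then show "R (\<kappa>' w')" unfolding R_def using w by blast
  next
    assume "R (\<kappa>' w')"
    then obtain w2 where w2: "w2\<in>A" "\<kappa> w2 = \<kappa>' w'" "Q w2" unfolding R_def by blast
    then show "Q' w'" using assms(4)[OF w2(1) that w2(2)] by simp
  qed
  have "card {w\<in>A. Q w} = card {w\<in>A. R (\<kappa> w)}" using 1 by (metis (mono_tags, lifting) Collect_cong)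
  also have "\<dots> = size (filter_mset R (image_mset \<kappa> (mset_set A)))"
    using assms(1) by (simp add: filter_mset_image_mset)
  also have "\<dots> = size (filter_mset R (image_mset \<kappa>' (mset_set A')))" using assms(3) by simp
  also have "\<dots> = card {w\<in>A'. R (\<kappa>' w)}"
    using assms(2) by (simp add: filter_mset_image_mset)
  also have "\<dots> = card {w\<in>A'. Q' w}" using 2 by (metis (mono_tags, lifting) Collect_cong)
  finally show ?thesis .
qed


lemma graph_facts:
  assumes "graph V E"
  shows "finite V" "\<And>x y. E x y \<Longrightarrow> x \<in> V" "\<And>x y. E x y \<Longrightarrow> y \<in> V"
    "\<And>x y. E x y \<Longrightarrow> E y x" "\<And>x. \<not> E x x" "\<And>a. a \<in> V \<Longrightarrow> nbh V E a \<noteq> {}"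
    "\<And>a. finite (nbh V E a)" "finite (ordered_edges V E)"
proof -
  show fV: "finite V" using assms unfolding graph_def by blast
  show "\<And>x y. E x y \<Longrightarrow> x \<in> V" "\<And>x y. E x y \<Longrightarrow> y \<in> V"
    "\<And>x y. E x y \<Longrightarrow> E y x" "\<And>x. \<not> E x x" using assms unfolding graph_def by blast+
  show "\<And>a. a \<in> V \<Longrightarrow> nbh V E a \<noteq> {}" using assms unfolding graph_def nbh_def by blast
  show "\<And>a. finite (nbh V E a)" using fV unfolding nbh_def by simp
  have "ordered_edges V E \<subseteq> V \<times> V" unfolding ordered_edges_def by auto
  then show "finite (ordered_edges V E)" using fV finite_subset by blast
qed

lemma vc_count:
  assumes g: "graph V E"
  shows "count (image_mset (vc (Suc r) V E) (mset_set V)) m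
       = count (image_mset c2 (eb_graph (Suc r) V E)) m div size m"
proof -
  note gf = graph_facts[OF g]
  define S where "S = {a\<in>V. vc (Suc r) V E a = m}"
  have "image_mset c2 (eb_graph (Suc r) V E)
      = image_mset (\<lambda>p. vc (Suc r) V E (fst p)) (mset_set (ordered_edges V E))"
    unfolding eb_graph_def by (simp add: multiset.map_comp comp_def split_def)
  then have "count (image_mset c2 (eb_graph (Suc r) V E)) m
      = card {p\<in>ordered_edges V E. vc (Suc r) V E (fst p) = m}"
    using gf(8) by (simp add: count_image_mset_set)
  also have "{p\<in>ordered_edges V E. vc (Suc r) V E (fst p) = m} = Sigma S (nbh V E)"
    unfolding S_def by (auto simp: ordered_edges_def nbh_def)
  also have "card (Sigma S (nbh V E)) = (\<Sum>a\<in>S. card (nbh V E a))"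
    using gf(1,7) unfolding S_def by (intro card_SigmaI) auto
  also have "\<dots> = (\<Sum>a\<in>S. size m)"
    unfolding S_def by (intro sum.cong) (auto simp: size_mset_set)
  finally have X: "count (image_mset c2 (eb_graph (Suc r) V E)) m = card S * size m" by simp
  have Y: "count (image_mset (vc (Suc r) V E) (mset_set V)) m = card S"
    unfolding S_def using gf(1) by (simp add: count_image_mset_set)
  show ?thesis
  proof (cases "size m = 0")
    case True
    have "S = {}"
    proof (rule ccontr)
      assume "S \<noteq> {}"
      then obtain a where "a \<in> S" by blast
      then have "a \<in> V" "size m = card (nbh V E a)" unfolding S_def by (auto simp: size_mset_set)
      then show False using True gf(6,7) by auto
    qed
    then show ?thesis using X Y True by simp
  next
    case False
    then show ?thesis using X Y by simp
  qed
qed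

lemma vertex_count:
  assumes "graph V E" "graph V' E'" "eb_graph (Suc r) V E = eb_graph (Suc r) V' E'"
  shows "image_mset (vc (Suc r) V E) (mset_set V) = image_mset (vc (Suc r) V' E') (mset_set V')"
  by (rule multiset_eqI) (simp add: vc_count[OF assms(1)] vc_count[OF assms(2)] assms(3))


lemma cfoc_distinct: "cfoc xs f \<Longrightarrow> distinct xs"
  by (induction rule: cfoc.induct) auto

lemma cfoc_vars: "cfoc xs f \<Longrightarrow> set xs \<subseteq> fvars f"
  by (cases rule: cfoc.cases) auto

lemma fvars_finite: "finite (fvars f)"
  by (induction f) auto

lemma card3_sub: "A \<subseteq> fvars g \<Longrightarrow> card (fvars g) \<le> 3 \<Longrightarrow> card A \<le> 3"
  by (meson card_mono fvars_finite le_trans)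

lemma cfoc_clique: "cfoc xs f \<Longrightarrow> sat V E \<sigma> f \<Longrightarrow> clique_sat E \<sigma> xs"
  by (erule cfoc.cases; clarsimp)

lemma clique_set:
  assumes "distinct xs" "\<And>x y. E x y \<Longrightarrow> E y x"
  shows "clique_sat E \<sigma> xs \<longleftrightarrow> (\<forall>x\<in>set xs. \<forall>y\<in>set xs. x \<noteq> y \<longrightarrow> E (\<sigma> x) (\<sigma> y))"
proof
  assume c: "clique_sat E \<sigma> xs"
  show "\<forall>x\<in>set xs. \<forall>y\<in>set xs. x \<noteq> y \<longrightarrow> E (\<sigma> x) (\<sigma> y)"
  proof (intro ballI impI)
    fix x y assume "x \<in> set xs" "y \<in> set xs" "x \<noteq> y"
    then obtain i j where ij: "i < length xs" "j < length xs" "x = xs ! i" "y = xs ! j"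
      by (metis in_set_conv_nth)
    with \<open>x \<noteq> y\<close> have "i < j \<or> j < i" by (metis linorder_neqE_nat)
    then show "E (\<sigma> x) (\<sigma> y)"
    proof
      assume "i < j" then show ?thesis using c ij unfolding clique_sat_def by blast
    next
      assume "j < i" then have "E (\<sigma> y) (\<sigma> x)" using c ij unfolding clique_sat_def by blast
      then show ?thesis using assms(2) by blast
    qed
  qed
next
  assume c: "\<forall>x\<in>set xs. \<forall>y\<in>set xs. x \<noteq> y \<longrightarrow> E (\<sigma> x) (\<sigma> y)"
  show "clique_sat E \<sigma> xs" unfolding clique_sat_def
  proof (intro allI impI)
    fix i j assume "i < j \<and> j < length xs"
    then have "xs ! i \<noteq> xs ! j" "xs ! i \<in> set xs" "xs ! j \<in> set xs"
      using assms(1) by (auto simp: nth_eq_iff_index_eq)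
    then show "E (\<sigma> (xs ! i)) (\<sigma> (xs ! j))" using c by blast
  qed
qed

definition Mt :: "'a set \<Rightarrow> ('a \<Rightarrow> 'a \<Rightarrow> bool) \<Rightarrow> 'b set \<Rightarrow> ('b \<Rightarrow> 'b \<Rightarrow> bool) \<Rightarrow> nat
   \<Rightarrow> nat set \<Rightarrow> (nat \<Rightarrow> 'a) \<Rightarrow> (nat \<Rightarrow> 'b) \<Rightarrow> bool" where
  "Mt V E V' E' s X \<sigma> \<sigma>' \<longleftrightarrow>
     (\<forall>x\<in>X. \<sigma> x \<in> V \<and> \<sigma>' x \<in> V' \<and> vc s V E (\<sigma> x) = vc s V' E' (\<sigma>' x)) \<and>
     (\<forall>x\<in>X. \<forall>y\<in>X. x \<noteq> y \<longrightarrow> (E (\<sigma> x) (\<sigma> y) \<longleftrightarrow> E' (\<sigma>' x) (\<sigma>' y)) \<and>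
        (E (\<sigma> x) (\<sigma> y) \<longrightarrow> eb s V E (\<sigma> x) (\<sigma> y) = eb s V' E' (\<sigma>' x) (\<sigma>' y)))"

lemma M_sub: "Mt V E V' E' s X \<sigma> \<sigma>' \<Longrightarrow> Y \<subseteq> X \<Longrightarrow> Mt V E V' E' s Y \<sigma> \<sigma>'"
  unfolding Mt_def by blast

lemma eb_down: "eb (Suc r) V E a b = eb (Suc r) V' E' a' b' \<Longrightarrow> eb r V E a b = eb r V' E' a' b'"
  by simp

lemma M_down: assumes M: "Mt V E V' E' (Suc r) X \<sigma> \<sigma>'" shows "Mt V E V' E' r X \<sigma> \<sigma>'"
  unfolding Mt_def
proof (intro conjI ballI impI)
  fix x assume x: "x \<in> X"
  then show "\<sigma> x \<in> V" "\<sigma>' x \<in> V'" using M unfolding Mt_def by blast+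
  show "vc r V E (\<sigma> x) = vc r V' E' (\<sigma>' x)" using M x unfolding Mt_def by (blast intro: vc_mono)
next
  fix x y assume xy: "x \<in> X" "y \<in> X" "x \<noteq> y"
  then show "E (\<sigma> x) (\<sigma> y) = E' (\<sigma>' x) (\<sigma>' y)" using M unfolding Mt_def by blast
  assume "E (\<sigma> x) (\<sigma> y)"
  then show "eb r V E (\<sigma> x) (\<sigma> y) = eb r V' E' (\<sigma>' x) (\<sigma>' y)"
    using M xy unfolding Mt_def by (blast intro: eb_down)
qed

lemma clique_M:
  assumes "graph V E" "graph V' E'" "distinct xs" "Mt V E V' E' s (set xs) \<sigma> \<sigma>'"
  shows "clique_sat E \<sigma> xs = clique_sat E' \<sigma>' xs"
proof -
  have h: "\<forall>x\<in>set xs. \<forall>y\<in>set xs. x \<noteq> y \<longrightarrow> (E (\<sigma> x) (\<sigma> y) \<longleftrightarrow> E' (\<sigma>' x) (\<sigma>' y))"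
    using assms(4) unfolding Mt_def by blast
  have s1: "\<And>x y. E x y \<Longrightarrow> E y x" "\<And>x y. E' x y \<Longrightarrow> E' y x"
    using graph_facts(4)[OF assms(1)] graph_facts(4)[OF assms(2)] by blast+
  have c1: "clique_sat E \<sigma> xs \<longleftrightarrow> (\<forall>x\<in>set xs. \<forall>y\<in>set xs. x \<noteq> y \<longrightarrow> E (\<sigma> x) (\<sigma> y))"
    by (rule clique_set[OF assms(3) s1(1)])
  have c2: "clique_sat E' \<sigma>' xs \<longleftrightarrow> (\<forall>x\<in>set xs. \<forall>y\<in>set xs. x \<noteq> y \<longrightarrow> E' (\<sigma>' x) (\<sigma>' y))"
    by (rule clique_set[OF assms(3) s1(2)])
  show ?thesis unfolding c1 c2
  proof
    assume L: "\<forall>x\<in>set xs. \<forall>y\<in>set xs. x \<noteq> y \<longrightarrow> E (\<sigma> x) (\<sigma> y)"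
    show "\<forall>x\<in>set xs. \<forall>y\<in>set xs. x \<noteq> y \<longrightarrow> E' (\<sigma>' x) (\<sigma>' y)"
      using L h by blast
  next
    assume L: "\<forall>x\<in>set xs. \<forall>y\<in>set xs. x \<noteq> y \<longrightarrow> E' (\<sigma>' x) (\<sigma>' y)"
    show "\<forall>x\<in>set xs. \<forall>y\<in>set xs. x \<noteq> y \<longrightarrow> E (\<sigma> x) (\<sigma> y)"
      using L h by blast
  qed
qed

lemma M_ext:
  assumes g: "graph V E" "graph V' E'"
    and M: "Mt V E V' E' r X \<sigma> \<sigma>'" and y: "y \<notin> X" and w: "w \<in> V" "w' \<in> V'"
    and e: "\<And>x. x \<in> X \<Longrightarrow> E (\<sigma> x) w \<and> E' (\<sigma>' x) w' \<and> eb r V E (\<sigma> x) w = eb r V' E' (\<sigma>' x) w'"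
    and v: "vc r V E w = vc r V' E' w'"
  shows "Mt V E V' E' r (insert y X) (\<sigma>(y := w)) (\<sigma>'(y := w'))"
proof -
  have e2: "E w (\<sigma> x) \<and> E' w' (\<sigma>' x) \<and> eb r V E w (\<sigma> x) = eb r V' E' w' (\<sigma>' x)" if "x \<in> X" for x
    using e[OF that] graph_facts(4)[OF g(1), of "\<sigma> x" w] graph_facts(4)[OF g(2), of "\<sigma>' x" w']
      eb_swap[of r V E "\<sigma> x" w V' E' "\<sigma>' x" w'] by blast
  have xy: "x \<noteq> y" if "x \<in> X" for x using y that by blast
  have M1: "\<sigma> x \<in> V \<and> \<sigma>' x \<in> V' \<and> vc r V E (\<sigma> x) = vc r V' E' (\<sigma>' x)" if "x \<in> X" for x
    using M that unfolding Mt_def by blast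
  have M2: "(E (\<sigma> x) (\<sigma> z) \<longleftrightarrow> E' (\<sigma>' x) (\<sigma>' z)) \<and>
        (E (\<sigma> x) (\<sigma> z) \<longrightarrow> eb r V E (\<sigma> x) (\<sigma> z) = eb r V' E' (\<sigma>' x) (\<sigma>' z))"
    if "x \<in> X" "z \<in> X" "x \<noteq> z" for x z
    using M that unfolding Mt_def by blast
  show ?thesis unfolding Mt_def
  proof (intro conjI ballI impI)
    fix x assume x: "x \<in> insert y X"
    show "(\<sigma>(y := w)) x \<in> V" using x M1 w v by (cases "x = y") simp_all
    show "(\<sigma>'(y := w')) x \<in> V'" using x M1 w v by (cases "x = y") simp_all
    show "vc r V E ((\<sigma>(y := w)) x) = vc r V' E' ((\<sigma>'(y := w')) x)"
      using x M1 w v by (cases "x = y") simp_all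
  next
    fix x z assume x: "x \<in> insert y X" and z: "z \<in> insert y X" and xz: "x \<noteq> z"
    show "E ((\<sigma>(y := w)) x) ((\<sigma>(y := w)) z) = E' ((\<sigma>'(y := w')) x) ((\<sigma>'(y := w')) z)"
    proof (cases "x = y")
      case True
      then show ?thesis using z xz e2 by auto
    next
      case False
      then show ?thesis using x z xz e M2 by (cases "z = y") auto
    qed
    assume ee: "E ((\<sigma>(y := w)) x) ((\<sigma>(y := w)) z)"
    show "eb r V E ((\<sigma>(y := w)) x) ((\<sigma>(y := w)) z) = eb r V' E' ((\<sigma>'(y := w')) x) ((\<sigma>'(y := w')) z)"
    proof (cases "x = y")
      case True
      then show ?thesis using z xz e2 by auto
    next
      case False
      then show ?thesis using x z xz e M2 ee by (cases "z = y") auto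
    qed
  qed
qed

lemma main:
  assumes g: "graph V E" "graph V' E'"
    and geq: "\<And>r. r < t \<Longrightarrow> eb_graph (Suc r) V E = eb_graph (Suc r) V' E'"
  shows "cfoc xs f \<Longrightarrow> card (fvars f) \<le> 3 \<Longrightarrow> qdepth f \<le> s \<Longrightarrow> s \<le> t
     \<Longrightarrow> Mt V E V' E' s (set xs) \<sigma> \<sigma>' \<Longrightarrow> sat V E \<sigma> f = sat V' E' \<sigma>' f"
proof (induction xs f arbitrary: s \<sigma> \<sigma>' rule: cfoc.induct)
  case (clq xs)
  then show ?case using clique_M[OF g] by simp
next
  case (neg xs f)
  have "card (fvars f) \<le> 3" by (rule card3_sub[OF _ neg.prems(1)]) auto
  have "sat V E \<sigma> f = sat V' E' \<sigma>' f"
    by (rule neg.IH[OF \<open>card (fvars f) \<le> 3\<close> _ neg.prems(3,4)]) (use neg.prems(2) in simp)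
  moreover have "clique_sat E \<sigma> xs = clique_sat E' \<sigma>' xs"
    using clique_M[OF g cfoc_distinct[OF neg.hyps] neg.prems(4)] .
  ultimately show ?case by simp
next
  case (conj xs f ys g zs)
  have c1: "card (fvars f) \<le> 3" by (rule card3_sub[OF _ conj.prems(1)]) auto
  have c2: "card (fvars g) \<le> 3" by (rule card3_sub[OF _ conj.prems(1)]) auto
  have m1: "Mt V E V' E' s (set xs) \<sigma> \<sigma>'" and m2: "Mt V E V' E' s (set ys) \<sigma> \<sigma>'"
    using M_sub[OF conj.prems(4)] conj.hyps(4) by auto
  have "sat V E \<sigma> f = sat V' E' \<sigma>' f"
    by (rule conj.IH(1)[OF c1 _ conj.prems(3) m1]) (use conj.prems(2) in simp)
  moreover have "sat V E \<sigma> g = sat V' E' \<sigma>' g"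
    by (rule conj.IH(2)[OF c2 _ conj.prems(3) m2]) (use conj.prems(2) in simp)
  moreover have "clique_sat E \<sigma> zs = clique_sat E' \<sigma>' zs"
    using clique_M[OF g conj.hyps(3) conj.prems(4)] .
  ultimately show ?case by simp
next
  case (disj xs f ys g zs)
  have c1: "card (fvars f) \<le> 3" by (rule card3_sub[OF _ disj.prems(1)]) auto
  have c2: "card (fvars g) \<le> 3" by (rule card3_sub[OF _ disj.prems(1)]) auto
  have m1: "Mt V E V' E' s (set xs) \<sigma> \<sigma>'" and m2: "Mt V E V' E' s (set ys) \<sigma> \<sigma>'"
    using M_sub[OF disj.prems(4)] disj.hyps(4) by auto
  have "sat V E \<sigma> f = sat V' E' \<sigma>' f"
    by (rule disj.IH(1)[OF c1 _ disj.prems(3) m1]) (use disj.prems(2) in simp)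
  moreover have "sat V E \<sigma> g = sat V' E' \<sigma>' g"
    by (rule disj.IH(2)[OF c2 _ disj.prems(3) m2]) (use disj.prems(2) in simp)
  moreover have "clique_sat E \<sigma> zs = clique_sat E' \<sigma>' zs"
    using clique_M[OF g disj.hyps(3) disj.prems(4)] .
  ultimately show ?case by simp
next
  case (ex xs y f k s \<sigma> \<sigma>')
  obtain r where s: "s = Suc r" using ex.prems(2) by (cases s) auto
  have rt: "r < t" using ex.prems(3) s by simp
  have dxy: "distinct (xs @ [y])" using cfoc_distinct[OF ex.hyps(1)] .
  then have yx: "y \<notin> set xs" and dx: "distinct xs" by auto
  have cf: "card (fvars f) \<le> 3" by (rule card3_sub[OF _ ex.prems(1)]) auto
  have "card (insert y (set xs)) \<le> 3"
    by (rule card3_sub[OF _ ex.prems(1)]) auto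
  then have len: "length xs \<le> 2" using yx dx by (simp add: distinct_card)
  have Ms: "Mt V E V' E' (Suc r) (set xs) \<sigma> \<sigma>'" using ex.prems(4) s by simp
  have Mr: "Mt V E V' E' r (set xs) \<sigma> \<sigma>'" using M_down[OF Ms] .
  have IH': "sat V E (\<sigma>(y:=w)) f = sat V' E' (\<sigma>'(y:=w')) f"
    if "Mt V E V' E' r (set (xs @ [y])) (\<sigma>(y:=w)) (\<sigma>'(y:=w'))" for w w'
    by (rule ex.IH[OF cf _ _ that]) (use ex.prems(2,3) s in simp_all)
  have cl: "clique_sat E \<sigma> xs = clique_sat E' \<sigma>' xs" using clique_M[OF g dx Ms] .
  note gf = graph_facts[OF g(1)] and gf' = graph_facts[OF g(2)]
  show ?case
  proof (cases "clique_sat E \<sigma> xs")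
    case False
    then show ?thesis using cl by simp
  next
    case True
    then have True': "clique_sat E' \<sigma>' xs" using cl by simp
    define A where "A = {w\<in>V. \<forall>x\<in>set xs. E (\<sigma> x) w}"
    define A' where "A' = {w\<in>V'. \<forall>x\<in>set xs. E' (\<sigma>' x) w}"
    have QA: "{w\<in>V. sat V E (\<sigma>(y:=w)) f} = {w\<in>A. sat V E (\<sigma>(y:=w)) f}"
    proof -
      have "w \<in> A" if "w \<in> V" "sat V E (\<sigma>(y:=w)) f" for w
      proof -
        have "clique_sat E (\<sigma>(y:=w)) (xs @ [y])" using cfoc_clique[OF ex.hyps(1) that(2)] .
        then have "\<forall>x\<in>set xs. E (\<sigma> x) w" using clique_set[OF dxy, of E] gf(4) yx
          by (metis (no_types, lifting) fun_upd_apply in_set_conv_decomp insertI1 list.simps(15) set_append Un_iff)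
        then show ?thesis using that unfolding A_def by blast
      qed
      then show ?thesis unfolding A_def by blast
    qed
    have QA': "{w\<in>V'. sat V' E' (\<sigma>'(y:=w)) f} = {w\<in>A'. sat V' E' (\<sigma>'(y:=w)) f}"
    proof -
      have "w \<in> A'" if "w \<in> V'" "sat V' E' (\<sigma>'(y:=w)) f" for w
      proof -
        have "clique_sat E' (\<sigma>'(y:=w)) (xs @ [y])" using cfoc_clique[OF ex.hyps(1) that(2)] .
        then have "\<forall>x\<in>set xs. E' (\<sigma>' x) w" using clique_set[OF dxy, of E'] gf'(4) yx
          by (metis (no_types, lifting) fun_upd_apply in_set_conv_decomp insertI1 list.simps(15) set_append Un_iff)
        then show ?thesis using that unfolding A'_def by blast
      qed
      then show ?thesis unfolding A'_def by blast
    qed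
    have finA: "finite A" "finite A'" using gf(1) gf'(1) unfolding A_def A'_def by auto
    have bridge: "sat V E (\<sigma>(y:=w)) f = sat V' E' (\<sigma>'(y:=w')) f"
      if w: "w \<in> A" "w' \<in> A'" and ebs: "\<forall>x\<in>set xs. eb r V E (\<sigma> x) w = eb r V' E' (\<sigma>' x) w'"
        and vcs: "vc r V E w = vc r V' E' w'" for w w'
    proof (rule IH')
      have "Mt V E V' E' r (insert y (set xs)) (\<sigma>(y:=w)) (\<sigma>'(y:=w'))"
        using M_ext[OF g Mr yx, of w w'] w ebs vcs unfolding A_def A'_def by blast
      then show "Mt V E V' E' r (set (xs @ [y])) (\<sigma>(y:=w)) (\<sigma>'(y:=w'))" by simp
    qed
    have "card {w\<in>A. sat V E (\<sigma>(y:=w)) f} = card {w\<in>A'. sat V' E' (\<sigma>'(y:=w)) f}"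
    proof (cases xs)
      case Nil
      have AV: "A = V" "A' = V'" unfolding A_def A'_def Nil by auto
      show ?thesis
      proof (rule card_key[OF finA, where \<kappa>="vc (Suc r) V E" and \<kappa>'="vc (Suc r) V' E'"])
        show "image_mset (vc (Suc r) V E) (mset_set A) = image_mset (vc (Suc r) V' E') (mset_set A')"
          unfolding AV using vertex_count[OF g geq[OF rt]] .
        fix w w' assume w: "w \<in> A" "w' \<in> A'" "vc (Suc r) V E w = vc (Suc r) V' E' w'"
        have "vc r V E w = vc r V' E' w'" by (rule vc_mono[OF w(3)])
        then show "sat V E (\<sigma>(y:=w)) f = sat V' E' (\<sigma>'(y:=w')) f"
          using bridge[OF w(1,2)] Nil by simp
      qed
    next
      case (Cons x rest)
      show ?thesis
      proof (cases rest)
        case Nil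
        have xs: "xs = [x]" using Cons Nil by simp
        have AN: "A = nbh V E (\<sigma> x)" "A' = nbh V' E' (\<sigma>' x)" unfolding A_def A'_def xs nbh_def by auto
        show ?thesis
        proof (rule card_key[OF finA, where \<kappa>="eb r V E (\<sigma> x)" and \<kappa>'="eb r V' E' (\<sigma>' x)"])
          have "vc (Suc r) V E (\<sigma> x) = vc (Suc r) V' E' (\<sigma>' x)" using Ms unfolding Mt_def xs by simp
          then show "image_mset (eb r V E (\<sigma> x)) (mset_set A) = image_mset (eb r V' E' (\<sigma>' x)) (mset_set A')"
            unfolding AN by simp
          fix w w' assume w: "w \<in> A" "w' \<in> A'" "eb r V E (\<sigma> x) w = eb r V' E' (\<sigma>' x) w'"
          then have "vc r V E w = vc r V' E' w'" using eb_swap eb_vc by metis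
          then show "sat V E (\<sigma>(y:=w)) f = sat V' E' (\<sigma>'(y:=w')) f"
            using bridge w xs by simp
        qed
      next
        case (Cons x2 rest2)
        then have xs: "xs = [x, x2]" using len \<open>xs = x # rest\<close> by (cases rest2) auto
        have x12: "x \<noteq> x2" using dx xs by simp
        have Eab: "E (\<sigma> x) (\<sigma> x2)" using True x12 unfolding xs clique_sat_def by auto
        have ebeq: "eb (Suc r) V E (\<sigma> x) (\<sigma> x2) = eb (Suc r) V' E' (\<sigma>' x) (\<sigma>' x2)"
          using Ms Eab x12 unfolding Mt_def xs by auto
        have AN: "A = nbh V E (\<sigma> x) \<inter> nbh V E (\<sigma> x2)" "A' = nbh V' E' (\<sigma>' x) \<inter> nbh V' E' (\<sigma>' x2)"
          unfolding A_def A'_def xs nbh_def by auto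
        show ?thesis
        proof (rule card_key[OF finA, where \<kappa>="\<lambda>w. (eb r V E (\<sigma> x) w, eb r V E (\<sigma> x2) w)"
              and \<kappa>'="\<lambda>w. (eb r V' E' (\<sigma>' x) w, eb r V' E' (\<sigma>' x2) w)"])
          show "image_mset (\<lambda>w. (eb r V E (\<sigma> x) w, eb r V E (\<sigma> x2) w)) (mset_set A) =
                image_mset (\<lambda>w. (eb r V' E' (\<sigma>' x) w, eb r V' E' (\<sigma>' x2) w)) (mset_set A')"
            using ebeq unfolding AN by simp
          fix w w' assume w: "w \<in> A" "w' \<in> A'"
            "(eb r V E (\<sigma> x) w, eb r V E (\<sigma> x2) w) = (eb r V' E' (\<sigma>' x) w', eb r V' E' (\<sigma>' x2) w')"
          then have "vc r V E w = vc r V' E' w'" using eb_swap eb_vc by (metis prod.inject)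
          then show "sat V E (\<sigma>(y:=w)) f = sat V' E' (\<sigma>'(y:=w')) f"
            using bridge w xs by simp
        qed
      qed
    qed
    then show ?thesis using QA QA' True True' by simp
  qed
qed

lemma tp_eq:
  assumes "length vs = length vs'"
    and "\<And>xs f. cfoc xs f \<Longrightarrow> card (fvars f) \<le> 3 \<Longrightarrow> qdepth f \<le> t \<Longrightarrow> length xs = length vs
          \<Longrightarrow> sat V E (assign xs vs) f = sat V' E' (assign xs vs') f"
  shows "tp t V E vs = tp t V' E' vs'"
proof -
  have "(cfoc xs f \<and> card (fvars f) \<le> 3 \<and> qdepth f \<le> t \<and> length xs = length vs \<and> sat V E (assign xs vs) f)
    = (cfoc xs f \<and> card (fvars f) \<le> 3 \<and> qdepth f \<le> t \<and> length xs = length vs' \<and> sat V' E' (assign xs vs') f)"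
    for xs f
  proof (cases "cfoc xs f \<and> card (fvars f) \<le> 3 \<and> qdepth f \<le> t \<and> length xs = length vs")
    case True
    then show ?thesis using assms(2)[of xs f] assms(1) by simp
  next
    case False
    then show ?thesis using assms(1) by auto
  qed
  then show ?thesis unfolding tp_def by simp
qed

lemma Mt_empty: "Mt V E V' E' t {} \<sigma> \<sigma>'"
  unfolding Mt_def by simp

lemma Mt_single:
  assumes "u \<in> V" "u' \<in> V'" "vc t V E u = vc t V' E' u'"
  shows "Mt V E V' E' t (set [x]) (assign [x] [u]) (assign [x] [u'])"
proof -
  have a: "assign [x] [u] x = u" "assign [x] [u'] x = u'" by (simp_all add: assign_def)
  show ?thesis unfolding Mt_def using assms by (simp add: a)
qed

lemma Mt_pair:
  assumes g: "graph V E" "graph V' E'" and e: "E u v" "E' u' v'"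
    and eq: "eb t V E u v = eb t V' E' u' v'" and x12: "x1 \<noteq> x2"
  shows "Mt V E V' E' t (set [x1, x2]) (assign [x1, x2] [u, v]) (assign [x1, x2] [u', v'])"
proof -
  have a: "assign [x1, x2] [u, v] x1 = u" "assign [x1, x2] [u', v'] x1 = u'"
     "assign [x1, x2] [u, v] x2 = v" "assign [x1, x2] [u', v'] x2 = v'"
    using x12 by (simp_all add: assign_def)
  note gf = graph_facts[OF g(1)] and gf' = graph_facts[OF g(2)]
  have f: "u \<in> V" "v \<in> V" "u' \<in> V'" "v' \<in> V'" "E v u" "E' v' u'"
    using e gf(2,3,4) gf'(2,3,4) by blast+
  have eq2: "eb t V E v u = eb t V' E' v' u'" using eb_swap[OF eq] .
  have vcs: "vc t V E u = vc t V' E' u'" "vc t V E v = vc t V' E' v'"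
    using eb_vc[OF eq] eb_vc[OF eq2] by simp_all
  show ?thesis unfolding Mt_def using f e eq eq2 vcs x12 by (auto simp: a)
qed

theorem mainTheorem7:
  fixes V :: "'a set" and E :: "'a \<Rightarrow> 'a \<Rightarrow> bool"
    and V' :: "'b set" and E' :: "'b \<Rightarrow> 'b \<Rightarrow> bool"
    and u v :: 'a and u' v' :: 'b and t :: nat
  assumes "graph V E" and "graph V' E'"
    and "(u, v) \<in> ordered_edges V E" and "(u', v') \<in> ordered_edges V' E'"
  shows "(eb_graph t V E = eb_graph t V' E' \<longrightarrow> tp t V E [] = tp t V' E' [])
       \<and> (eb t V E u v = eb t V' E' u' v' \<and> eb_graph t V E = eb_graph t V' E' \<longrightarrow>
            tp t V E [u] = tp t V' E' [u'] \<and> tp t V E [v] = tp t V' E' [v']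
            \<and> tp t V E [u, v] = tp t V' E' [u', v'])"
proof -
  have g: "graph V E" "graph V' E'" by fact+
  have uv: "u \<in> V" "v \<in> V" "E u v" using assms(3) unfolding ordered_edges_def by auto
  have uv': "u' \<in> V'" "v' \<in> V'" "E' u' v'" using assms(4) unfolding ordered_edges_def by auto
  show ?thesis
  proof (intro conjI impI)
    assume ge: "eb_graph t V E = eb_graph t V' E'"
    have gl: "\<And>r. r < t \<Longrightarrow> eb_graph (Suc r) V E = eb_graph (Suc r) V' E'"
      using eb_graph_le[OF ge] by simp
    show "tp t V E [] = tp t V' E' []"
    proof (rule tp_eq)
      fix xs f assume h: "cfoc xs f" "card (fvars f) \<le> 3" "qdepth f \<le> t" "length xs = length ([] :: 'a list)"
      then have "xs = []" by simp
      then have "Mt V E V' E' t (set xs) (assign xs ([] :: 'a list)) (assign xs ([] :: 'b list))"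
        using Mt_empty by simp
      then show "sat V E (assign xs []) f = sat V' E' (assign xs []) f"
        using main[OF g gl h(1,2,3) order_refl] by simp
    qed simp
  next
    assume H: "eb t V E u v = eb t V' E' u' v' \<and> eb_graph t V E = eb_graph t V' E'"
    then have eq: "eb t V E u v = eb t V' E' u' v'" and ge: "eb_graph t V E = eb_graph t V' E'" by simp_all
    have gl: "\<And>r. r < t \<Longrightarrow> eb_graph (Suc r) V E = eb_graph (Suc r) V' E'"
      using eb_graph_le[OF ge] by simp
    show "tp t V E [u] = tp t V' E' [u']"
    proof (rule tp_eq)
      fix xs f assume h: "cfoc xs f" "card (fvars f) \<le> 3" "qdepth f \<le> t" "length xs = length [u]"
      obtain x where xs: "xs = [x]" using h(4) by (auto simp: length_Suc_conv)
      have "Mt V E V' E' t (set [x]) (assign [x] [u]) (assign [x] [u'])"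
        by (rule Mt_single) (use uv uv' eb_vc[OF eq] in simp_all)
      then show "sat V E (assign xs [u]) f = sat V' E' (assign xs [u']) f"
        using main[OF g gl h(1,2,3) order_refl] xs by simp
    qed simp
    show "tp t V E [v] = tp t V' E' [v']"
    proof (rule tp_eq)
      fix xs f assume h: "cfoc xs f" "card (fvars f) \<le> 3" "qdepth f \<le> t" "length xs = length [v]"
      obtain x where xs: "xs = [x]" using h(4) by (auto simp: length_Suc_conv)
      have "Mt V E V' E' t (set [x]) (assign [x] [v]) (assign [x] [v'])"
        by (rule Mt_single) (use uv uv' eb_vc[OF eb_swap[OF eq]] in simp_all)
      then show "sat V E (assign xs [v]) f = sat V' E' (assign xs [v']) f"
        using main[OF g gl h(1,2,3) order_refl] xs by simp
    qed simp
    show "tp t V E [u, v] = tp t V' E' [u', v']"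
    proof (rule tp_eq)
      fix xs f assume h: "cfoc xs f" "card (fvars f) \<le> 3" "qdepth f \<le> t" "length xs = length [u, v]"
      obtain x1 x2 where xs: "xs = [x1, x2]" using h(4) by (auto simp: length_Suc_conv)
      have x12: "x1 \<noteq> x2" using cfoc_distinct[OF h(1)] xs by simp
      have "Mt V E V' E' t (set [x1, x2]) (assign [x1, x2] [u, v]) (assign [x1, x2] [u', v'])"
        by (rule Mt_pair[OF g uv(3) uv'(3) eq x12])
      then show "sat V E (assign xs [u, v]) f = sat V' E' (assign xs [u', v']) f"
        using main[OF g gl h(1,2,3) order_refl] xs by simp
    qed simp
  qed
qed

end
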